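(* Let $A=(Q,R,F_A)$ be an RNNA, regarded as the coalgebra $c\colon Q\to G\mathcal{P}_{\mathsf{ufs}}Q=2\times(\mathcal{P}_{\mathsf{ufs}}Q)^{\mathbb{A}}\times[\mathbb{A}]\mathcal{P}_{\mathsf{ufs}}Q$, $c(q)=(f(q),\,a\mapsto\{q':q\xrightarrow{a}q'\},\,\langle a\rangle\{q':q\xrightarrow{\mathord{|}a}q'\})$ with $f(q)=1$ iff $q\in F_A$ and $a$ fresh for $q$. Let $c^\sharp\colon\mathcal{P}_{\mathsf{ufs}}Q\to G\mathcal{P}_{\mathsf{ufs}}Q$ be its determinization, $c^\sharp(S)=(\max_{s\in S}f(s),\,a\mapsto\bigcup_{s\in S}\{q':s\xrightarrow{a}q'\},\,\langle a\rangle\bigcup_{s\in S}\{q':s\xrightarrow{\mathord{|}a}q'\})$ with $a$ fresh for $S$, let $h$ be the unique $G$-coalgebra homomorphism from $(\mathcal{P}_{\mathsf{ufs}}Q,c^\sharp)$ to the terminal $G$-coalgebra $(\mathcal{P}_{\mathsf{fs}}(\overline{\mathbb{A}}^*/{=_\alpha}),\tau)$, and let $\ddagger c(q)=h(\{q\})$. Then for every state $q$, $\ddagger c(q)$ is the bar language accepted by $q$.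
   Context: Fix a countably infinite set $\mathbb{A}$ of names; $\mathsf{Nom}$: nominal sets and equivariant maps; $\mathrm{supp}$ least support, "fresh" means not in the support. $[\mathbb{A}]X=(\mathbb{A}\times X)/\sim$, $(a,x)\sim(b,y)$ iff $(a\,c)\cdot x=(b\,c)\cdot y$ for fresh $c$, classes $\langle a\rangle x$. $\mathcal{P}_{\mathsf{fs}}$, $\mathcal{P}_{\mathsf{ufs}}$: finitely / uniformly finitely supported ($\bigcup_{x\in A}\mathrm{supp}(x)$ finite) subsets. $GX=2\times X^{\mathbb{A}}\times[\mathbb{A}]X$, $2=\{0,1\}$. Bar strings: words over $\overline{\mathbb{A}}=\mathbb{A}\cup\{\mathord{|}a:a\in\mathbb{A}\}$; $=_\alpha$ the least equivalence with $x\,\mathord{|}a\,v=_\alpha x\,\mathord{|}b\,w$ whenever $\langle a\rangle v=\langle b\rangle w$ (i.e. $a=b,v=w$, or $b$ fresh for $v$ and $(a\,b)\cdot v=w$), classes $[w]_\alpha$. The terminal $G$-coalgebra has carrier $\mathcal{P}_{\mathsf{fs}}(\overline{\mathbb{A}}^*/{=_\alpha})$ and $\tau(S)=(b,a\mapsto\{[w]_\alpha:[aw]_\alpha\in S\},\langle a\rangle\{[w]_\alpha:[\mathord{|}a\,w]_\alpha\in S\})$, $b=1$ iff $[\varepsilon]_\alpha\in S$, $a$ fresh for $S$. An RNNA $(Q,R,F_A)$: orbit-finite nominal set $Q$, equivariant $R\subseteq Q\times\overline{\mathbb{A}}\times Q$ (write $q\xrightarrow{\sigma}q'$), equivariant $F_A\subseteq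 Q$ of final states, such that (a) if $q\xrightarrow{\mathord{|}a}q'$ and $\langle a\rangle q'=\langle b\rangle q''$ then $q\xrightarrow{\mathord{|}b}q''$; (b) for each $q$ the sets $\{(a,q'):q\xrightarrow{a}q'\}$ and $\{\langle a\rangle q':q\xrightarrow{\mathord{|}a}q'\}$ are finite. $q$ accepts $w=\sigma_1\cdots\sigma_n$ if there is a run $q\xrightarrow{\sigma_1}q_1\cdots\xrightarrow{\sigma_n}q_n$ with $q_n$ final; the accepted bar language is $\{[w]_\alpha:q\text{ accepts }w\}$. *)

theory Defs
  imports Main
begin

text \<open>The countably infinite set of names is modelled by nat.\<close>
type_synonym name = nat

definition perm_fin :: "(name \<Rightarrow> name) \<Rightarrow> bool" where
  "perm_fin p \<longleftrightarrow> bij p \<and> finite {a. p a \<noteq> a}"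

definition nswap :: "name \<Rightarrow> name \<Rightarrow> name \<Rightarrow> name" where
  "nswap a b c = (if c = a then b else if c = b then a else c)"

type_synonym 'x action = "(name \<Rightarrow> name) \<Rightarrow> 'x \<Rightarrow> 'x"

definition supports :: "'x action \<Rightarrow> name set \<Rightarrow> 'x \<Rightarrow> bool" where
  "supports act S x \<longleftrightarrow> (\<forall>p. perm_fin p \<and> (\<forall>a\<in>S. p a = a) \<longrightarrow> act p x = x)"

definition supp :: "'x action \<Rightarrow> 'x \<Rightarrow> name set" where
  "supp act x = \<Inter>{S. finite S \<and> supports act S x}"

definition fresh :: "'x action \<Rightarrow> name \<Rightarrow> 'x \<Rightarrow> bool" where
  "fresh act a x \<longleftrightarrow> a \<notin> supp act x"

definition nominal :: "'x set \<Rightarrow> 'x action \<Rightarrow> bool" where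
  "nominal X act \<longleftrightarrow>
     (\<forall>x\<in>X. act id x = x) \<and>
     (\<forall>p q x. perm_fin p \<and> perm_fin q \<and> x \<in> X \<longrightarrow> act (p \<circ> q) x = act p (act q x)) \<and>
     (\<forall>p x. perm_fin p \<and> x \<in> X \<longrightarrow> act p x \<in> X) \<and>
     (\<forall>x\<in>X. \<exists>S. finite S \<and> supports act S x)"

definition orbit :: "'x action \<Rightarrow> 'x \<Rightarrow> 'x set" where
  "orbit act x = {act p x | p. perm_fin p}"

definition orbit_finite :: "'x set \<Rightarrow> 'x action \<Rightarrow> bool" where
  "orbit_finite X act \<longleftrightarrow> finite (orbit act ` X)"

definition equivariant_map :: "'x set \<Rightarrow> 'x action \<Rightarrow> 'y action \<Rightarrow> ('x \<Rightarrow> 'y) \<Rightarrow> bool" where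
  "equivariant_map X actX actY h \<longleftrightarrow>
     (\<forall>p x. perm_fin p \<and> x \<in> X \<longrightarrow> h (actX p x) = actY p (h x))"

definition setact :: "'x action \<Rightarrow> 'x set action" where
  "setact act p S = act p ` S"

definition Pfs :: "'x set \<Rightarrow> 'x action \<Rightarrow> 'x set set" where
  "Pfs X act = {S. S \<subseteq> X \<and> (\<exists>T. finite T \<and> supports (setact act) T S)}"

definition Pufs :: "'x set \<Rightarrow> 'x action \<Rightarrow> 'x set set" where
  "Pufs X act = {S. S \<subseteq> X \<and> finite (\<Union>x\<in>S. supp act x)}"

definition abs_rel :: "'x action \<Rightarrow> name \<times> 'x \<Rightarrow> name \<times> 'x \<Rightarrow> bool" where
  "abs_rel act ax by \<longleftrightarrow>
     (case ax of (a, x) \<Rightarrow> case by of (b, y) \<Rightarrow>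
       (\<exists>c. c \<noteq> a \<and> c \<noteq> b \<and> fresh act c x \<and> fresh act c y \<and>
            act (nswap a c) x = act (nswap b c) y))"

text \<open>The class \<open><a>x\<close> in [A]X, as a set of representatives.\<close>
definition abs_cl :: "'x set \<Rightarrow> 'x action \<Rightarrow> name \<Rightarrow> 'x \<Rightarrow> (name \<times> 'x) set" where
  "abs_cl X act a x = {(b, y). y \<in> X \<and> abs_rel act (a, x) (b, y)}"

definition abs_map :: "'y set \<Rightarrow> 'y action \<Rightarrow> ('x \<Rightarrow> 'y) \<Rightarrow> (name \<times> 'x) set \<Rightarrow> (name \<times> 'y) set" where
  "abs_map Y actY h C = (\<Union>(a, x)\<in>C. abs_cl Y actY a (h x))"

type_synonym 'x Gobj = "bool \<times> (name \<Rightarrow> 'x) \<times> (name \<times> 'x) set"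

definition Gmap :: "'y set \<Rightarrow> 'y action \<Rightarrow> ('x \<Rightarrow> 'y) \<Rightarrow> 'x Gobj \<Rightarrow> 'y Gobj" where
  "Gmap Y actY h g = (case g of (b, f, C) \<Rightarrow> (b, h \<circ> f, abs_map Y actY h C))"

definition G_hom ::
  "'x set \<Rightarrow> 'x action \<Rightarrow> ('x \<Rightarrow> 'x Gobj) \<Rightarrow> 'y set \<Rightarrow> 'y action \<Rightarrow> ('y \<Rightarrow> 'y Gobj) \<Rightarrow> ('x \<Rightarrow> 'y) \<Rightarrow> bool" where
  "G_hom X actX cX Y actY cY h \<longleftrightarrow>
     (\<forall>x\<in>X. h x \<in> Y) \<and> equivariant_map X actX actY h \<and>
     (\<forall>x\<in>X. Gmap Y actY h (cX x) = cY (h x))"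

datatype bletter = Plain name | Bar name

definition bperm :: "bletter action" where
  "bperm p l = (case l of Plain a \<Rightarrow> Plain (p a) | Bar a \<Rightarrow> Bar (p a))"

definition wperm :: "bletter list action" where
  "wperm p w = map (bperm p) w"

definition alpha_step :: "bletter list \<Rightarrow> bletter list \<Rightarrow> bool" where
  "alpha_step u u' \<longleftrightarrow>
     (\<exists>x a v b w. u = x @ Bar a # v \<and> u' = x @ Bar b # w \<and>
        ((a = b \<and> v = w) \<or> (fresh wperm b v \<and> wperm (nswap a b) v = w)))"

definition alpha_eq :: "bletter list \<Rightarrow> bletter list \<Rightarrow> bool" where
  "alpha_eq = equivclp alpha_step"

type_synonym bclass = "bletter list set"

definition acls :: "bletter list \<Rightarrow> bclass" where
  "acls w = {v. alpha_eq w v}"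

definition clsperm :: "bclass action" where
  "clsperm = setact wperm"

definition langperm :: "bclass set action" where
  "langperm = setact clsperm"

definition Term :: "bclass set set" where
  "Term = Pfs (range acls) clsperm"

definition tau :: "bclass set \<Rightarrow> bclass set Gobj" where
  "tau L = (let a0 = (SOME a. fresh langperm a L) in
     (acls [] \<in> L,
      \<lambda>a. {acls w | w. acls (Plain a # w) \<in> L},
      abs_cl Term langperm a0 {acls w | w. acls (Bar a0 # w) \<in> L}))"

definition rnna :: "'q set \<Rightarrow> 'q action \<Rightarrow> ('q \<times> bletter \<times> 'q) set \<Rightarrow> 'q set \<Rightarrow> bool" where
  "rnna Q act R F \<longleftrightarrow>
     nominal Q act \<and> orbit_finite Q act \<and>
     R \<subseteq> Q \<times> UNIV \<times> Q \<and>
     (\<forall>p q s q'. perm_fin p \<and> (q, s, q') \<in> R \<longrightarrow> (act p q, bperm p s, act p q') \<in> R) \<and>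
     F \<subseteq> Q \<and> (\<forall>p q. perm_fin p \<and> q \<in> F \<longrightarrow> act p q \<in> F) \<and>
     (\<forall>q a q' b q''. (q, Bar a, q') \<in> R \<and> q'' \<in> Q \<and> abs_rel act (a, q') (b, q'')
         \<longrightarrow> (q, Bar b, q'') \<in> R) \<and>
     (\<forall>q\<in>Q. finite {(a, q'). (q, Plain a, q') \<in> R} \<and>
             finite {abs_cl Q act a q' | a q'. (q, Bar a, q') \<in> R})"

inductive accepts :: "('q \<times> bletter \<times> 'q) set \<Rightarrow> 'q set \<Rightarrow> 'q \<Rightarrow> bletter list \<Rightarrow> bool"
  for R F where
  acc_nil: "q \<in> F \<Longrightarrow> accepts R F q []"
| acc_cons: "(q, s, q') \<in> R \<Longrightarrow> accepts R F q' w \<Longrightarrow> accepts R F q (s # w)"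

definition bar_lang :: "('q \<times> bletter \<times> 'q) set \<Rightarrow> 'q set \<Rightarrow> 'q \<Rightarrow> bclass set" where
  "bar_lang R F q = {acls w | w. accepts R F q w}"

definition succs :: "('q \<times> bletter \<times> 'q) set \<Rightarrow> bletter \<Rightarrow> 'q set \<Rightarrow> 'q set" where
  "succs R s S = (\<Union>x\<in>S. {q'. (x, s, q') \<in> R})"

definition det :: "'q set \<Rightarrow> 'q action \<Rightarrow> ('q \<times> bletter \<times> 'q) set \<Rightarrow> 'q set \<Rightarrow> 'q set \<Rightarrow> 'q set Gobj" where
  "det Q act R F S = (let a0 = (SOME a. fresh (setact act) a S) in
     (\<exists>s\<in>S. s \<in> F,
      \<lambda>a. succs R (Plain a) S,
      abs_cl (Pufs Q act) (setact act) a0 (succs R (Bar a0) S)))"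

end

theory Submission
  imports Defs
begin


section \<open>Permutations\<close>

lemma nswap_nswap[simp]: "nswap a b (nswap a b x) = x"
  by (simp add: nswap_def)

lemma nswap_comp_self[simp]: "nswap a b \<circ> nswap a b = id"
  by (rule ext) simp

lemma nswap_same[simp]: "nswap a a = id"
  by (rule ext) (simp add: nswap_def)

lemma nswap_left[simp]: "nswap a b a = b" and nswap_right[simp]: "nswap a b b = a"
  by (simp_all add: nswap_def)

lemma nswap_other[simp]: "c \<noteq> a \<Longrightarrow> c \<noteq> b \<Longrightarrow> nswap a b c = c"
  by (simp add: nswap_def)

lemma bij_nswap: "bij (nswap a b)"
  by (rule o_bij[of "nswap a b"]) simp_all

lemma inj_nswap: "inj (nswap a b)"
  using bij_nswap bij_is_inj by blast

lemma perm_fin_nswap[simp]: "perm_fin (nswap a b)"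
proof -
  have "{x. nswap a b x \<noteq> x} \<subseteq> {a,b}" by (auto simp: nswap_def)
  then show ?thesis unfolding perm_fin_def using finite_subset bij_nswap by blast
qed

lemma perm_fin_comp[simp]: "perm_fin p \<Longrightarrow> perm_fin q \<Longrightarrow> perm_fin (p \<circ> q)"
proof -
  assume p: "perm_fin p" and q: "perm_fin q"
  have "{a. (p \<circ> q) a \<noteq> a} \<subseteq> {a. p a \<noteq> a} \<union> {a. q a \<noteq> a}" by auto
  then show ?thesis using p q unfolding perm_fin_def
    by (meson bij_comp finite_UnI finite_subset)
qed

lemma fresh_name: "finite (A :: nat set) \<Longrightarrow> \<exists>c. c \<notin> A"
  using ex_new_if_finite infinite_UNIV_nat by blast

section \<open>Group actions\<close>

definition gact :: "'x set \<Rightarrow> 'x action \<Rightarrow> bool" where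
  "gact X act \<longleftrightarrow> (\<forall>x\<in>X. act id x = x) \<and>
     (\<forall>p q x. perm_fin p \<and> perm_fin q \<and> x \<in> X \<longrightarrow> act (p \<circ> q) x = act p (act q x)) \<and>
     (\<forall>p x. perm_fin p \<and> x \<in> X \<longrightarrow> act p x \<in> X)"

lemma gact_id: "gact X act \<Longrightarrow> x \<in> X \<Longrightarrow> act id x = x"
  unfolding gact_def by blast

lemma gact_comp: "gact X act \<Longrightarrow> perm_fin p \<Longrightarrow> perm_fin q \<Longrightarrow> x \<in> X \<Longrightarrow> act (p \<circ> q) x = act p (act q x)"
  unfolding gact_def by blast

lemma gact_closed: "gact X act \<Longrightarrow> perm_fin p \<Longrightarrow> x \<in> X \<Longrightarrow> act p x \<in> X"
  unfolding gact_def by blast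

lemma gact_inv: "gact X act \<Longrightarrow> x \<in> X \<Longrightarrow> act (nswap a b) (act (nswap a b) x) = x"
  using gact_comp[of X act "nswap a b" "nswap a b" x] gact_id[of X act x] by simp

lemma nominal_gact: "nominal X act \<Longrightarrow> gact X act"
  unfolding nominal_def gact_def by blast

lemma gact_setact: "gact X act \<Longrightarrow> gact {S. S \<subseteq> X} (setact act)"
  unfolding gact_def setact_def
proof (intro conjI allI impI ballI)
  assume g: "(\<forall>x\<in>X. act id x = x) \<and>
     (\<forall>p q x. perm_fin p \<and> perm_fin q \<and> x \<in> X \<longrightarrow> act (p \<circ> q) x = act p (act q x)) \<and>
     (\<forall>p x. perm_fin p \<and> x \<in> X \<longrightarrow> act p x \<in> X)"
  fix S assume "S \<in> {S. S \<subseteq> X}"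
  then show "act id ` S = S" using g by (force simp: image_iff)
next
  fix p q S
  assume g: "(\<forall>x\<in>X. act id x = x) \<and>
     (\<forall>p q x. perm_fin p \<and> perm_fin q \<and> x \<in> X \<longrightarrow> act (p \<circ> q) x = act p (act q x)) \<and>
     (\<forall>p x. perm_fin p \<and> x \<in> X \<longrightarrow> act p x \<in> X)"
    and h: "perm_fin p \<and> perm_fin q \<and> S \<in> {S. S \<subseteq> X}"
  then have "\<forall>x\<in>S. act (p \<circ> q) x = act p (act q x)" by blast
  then show "act (p \<circ> q) ` S = act p ` act q ` S" by (simp add: image_image cong: image_cong)
next
  fix p S
  assume g: "(\<forall>x\<in>X. act id x = x) \<and>
     (\<forall>p q x. perm_fin p \<and> perm_fin q \<and> x \<in> X \<longrightarrow> act (p \<circ> q) x = act p (act q x)) \<and>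
     (\<forall>p x. perm_fin p \<and> x \<in> X \<longrightarrow> act p x \<in> X)"
    and h: "perm_fin p \<and> S \<in> {S. S \<subseteq> X}"
  then show "act p ` S \<in> {S. S \<subseteq> X}" by blast
qed

lemma gact_setact_UNIV: "gact UNIV act \<Longrightarrow> gact UNIV (setact act)"
  using gact_setact[of UNIV act] by simp

lemma supp_subset: "finite T \<Longrightarrow> supports act T x \<Longrightarrow> supp act x \<subseteq> T"
  unfolding supp_def by blast

lemma finite_supp: "finite T \<Longrightarrow> supports act T x \<Longrightarrow> finite (supp act x)"
  using supp_subset finite_subset by metis

lemma supp_swap_fix:
  assumes g: "gact X act" and x: "x \<in> X" and a: "a \<notin> supp act x" and b: "b \<notin> supp act x"
  shows "act (nswap a b) x = x"
proof (cases "a = b")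
  case True then show ?thesis using gact_id[OF g x] by simp
next
  case False
  obtain Sa where Sa: "finite Sa" "supports act Sa x" "a \<notin> Sa" using a unfolding supp_def by blast
  obtain Sb where Sb: "finite Sb" "supports act Sb x" "b \<notin> Sb" using b unfolding supp_def by blast
  obtain c where c: "c \<notin> Sa \<union> Sb \<union> {a, b}" using fresh_name[of "Sa \<union> Sb \<union> {a,b}"] Sa Sb by blast
  have fa: "act (nswap a c) x = x"
    using Sa(2) Sa(3) c unfolding supports_def
    by (metis UnCI nswap_other perm_fin_nswap)
  have fb: "act (nswap b c) x = x"
    using Sb(2) Sb(3) c unfolding supports_def
    by (metis UnCI nswap_other perm_fin_nswap)
  have eq: "nswap a b = nswap a c \<circ> (nswap b c \<circ> nswap a c)"
    using False c by (auto simp: nswap_def fun_eq_iff)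
  have "act (nswap a b) x = act (nswap a c) (act (nswap b c) (act (nswap a c) x))"
    unfolding eq using g x by (simp add: gact_comp gact_closed)
  then show ?thesis using fa fb by simp
qed

lemma supports_swap_image:
  assumes g: "gact X act" and x: "x \<in> X" and s: "supports act T x"
  shows "supports act (nswap a b ` T) (act (nswap a b) x)"
  unfolding supports_def
proof (intro allI impI)
  fix r assume r: "perm_fin r \<and> (\<forall>y\<in>nswap a b ` T. r y = y)"
  define r' where "r' = nswap a b \<circ> r \<circ> nswap a b"
  have pr': "perm_fin r'" unfolding r'_def using r by simp
  have "\<forall>y\<in>T. r' y = y" unfolding r'_def using r by auto
  then have rfix: "act r' x = x" using s pr' unfolding supports_def by blast
  have rr: "r \<circ> nswap a b = nswap a b \<circ> r'" unfolding r'_def by (auto simp: fun_eq_iff)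
  have "act r (act (nswap a b) x) = act (r \<circ> nswap a b) x"
    using gact_comp[OF g _ _ x] r by simp
  also have "\<dots> = act (nswap a b) (act r' x)" unfolding rr using gact_comp[OF g _ pr' x] by simp
  finally show "act r (act (nswap a b) x) = act (nswap a b) x" using rfix by simp
qed

lemma swap_conj:
  assumes g: "gact X act" and z: "z \<in> X" and c: "c \<notin> supp act z" and e: "e \<notin> supp act z"
    and d: "d \<noteq> c" "d \<noteq> e" "c \<noteq> e"
  shows "act (nswap d e) z = act (nswap c e) (act (nswap d c) z)"
proof -
  have eq: "nswap d e = nswap c e \<circ> (nswap d c \<circ> nswap c e)"
    using d by (auto simp: nswap_def fun_eq_iff)
  have "act (nswap d e) z = act (nswap c e) (act (nswap d c) (act (nswap c e) z))"
    unfolding eq using g z by (simp add: gact_comp gact_closed)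
  then show ?thesis using supp_swap_fix[OF g z c e] by simp
qed

lemma abs_rel_iff: "abs_rel act (a, x) (b, y) \<longleftrightarrow>
   (\<exists>c. c \<noteq> a \<and> c \<noteq> b \<and> fresh act c x \<and> fresh act c y \<and> act (nswap a c) x = act (nswap b c) y)"
  unfolding abs_rel_def by simp

lemma abs_rel_all:
  assumes g: "gact X act" and x: "x \<in> X" and y: "y \<in> X" and r: "abs_rel act (a, x) (b, y)"
    and e: "e \<notin> supp act x" "e \<notin> supp act y" "e \<noteq> a" "e \<noteq> b"
  shows "act (nswap a e) x = act (nswap b e) y"
proof -
  obtain c where c: "c \<noteq> a" "c \<noteq> b" "c \<notin> supp act x" "c \<notin> supp act y"
     "act (nswap a c) x = act (nswap b c) y"
    using r unfolding abs_rel_iff fresh_def by blast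
  show ?thesis
  proof (cases "e = c")
    case True then show ?thesis using c by simp
  next
    case False
    have "act (nswap a e) x = act (nswap c e) (act (nswap a c) x)"
      using swap_conj[OF g x c(3) e(1)] c e False by metis
    moreover have "act (nswap b e) y = act (nswap c e) (act (nswap b c) y)"
      using swap_conj[OF g y c(4) e(2)] c e False by metis
    ultimately show ?thesis using c(5) by simp
  qed
qed



section \<open>Words\<close>

fun nm :: "bletter \<Rightarrow> name" where
  "nm (Plain a) = a" | "nm (Bar a) = a"

definition names :: "bletter list \<Rightarrow> name set" where
  "names w = nm ` set w"

lemma names_simps[simp]: "names [] = {}" "names (l # w) = insert (nm l) (names w)"
  "names (u @ v) = names u \<union> names v"
  by (auto simp: names_def)

lemma finite_names[simp]: "finite (names w)"
  by (simp add: names_def)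

lemma bperm_simps[simp]: "bperm p (Plain a) = Plain (p a)" "bperm p (Bar a) = Bar (p a)"
  by (simp_all add: bperm_def)

lemma nm_bperm[simp]: "nm (bperm p l) = p (nm l)"
  by (cases l) simp_all

lemma wperm_simps[simp]: "wperm p [] = []" "wperm p (l # w) = bperm p l # wperm p w"
  "wperm p (u @ v) = wperm p u @ wperm p v" "length (wperm p w) = length w"
  by (simp_all add: wperm_def)

lemma names_wperm[simp]: "names (wperm p w) = p ` names w"
  by (induction w) auto

lemma wperm_comp: "wperm (p \<circ> q) w = wperm p (wperm q w)"
  by (induction w) (auto simp: bperm_def split: bletter.splits)

lemma wperm_id[simp]: "wperm id w = w"
  by (induction w) (auto simp: bperm_def split: bletter.splits)

lemma wperm_cong: "(\<And>a. a \<in> names w \<Longrightarrow> p a = p' a) \<Longrightarrow> wperm p w = wperm p' w"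
  by (induction w) (auto simp: bperm_def split: bletter.splits)

lemma wperm_swap_inv[simp]: "wperm (nswap a b) (wperm (nswap a b) w) = w"
  by (simp add: wperm_comp[symmetric])

lemma gact_wperm: "gact UNIV wperm"
  unfolding gact_def by (simp add: wperm_comp)

lemma gact_clsperm: "gact UNIV clsperm"
  unfolding clsperm_def by (rule gact_setact_UNIV[OF gact_wperm])

lemma gact_langperm: "gact UNIV langperm"
  unfolding langperm_def by (rule gact_setact_UNIV[OF gact_clsperm])

lemma supp_wperm: "supp wperm w = names w"
proof
  have "supports wperm (names w) w"
    unfolding supports_def by (auto intro: wperm_cong[where p'=id, simplified])
  then show "supp wperm w \<subseteq> names w" by (simp add: supp_subset)
next
  show "names w \<subseteq> supp wperm w"
  proof
    fix a assume a: "a \<in> names w"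
    show "a \<in> supp wperm w" unfolding supp_def
    proof (rule InterI, clarify)
      fix T assume T: "finite T" "supports wperm T w"
      show "a \<in> T"
      proof (rule ccontr)
        assume aT: "a \<notin> T"
        obtain c where c: "c \<notin> T \<union> names w \<union> {a}" using fresh_name[of "T \<union> names w \<union> {a}"] T by auto
        have "wperm (nswap a c) w = w" using T(2) aT c unfolding supports_def
          by (metis UnCI nswap_other perm_fin_nswap)
        then have "names (wperm (nswap a c) w) = names w" by simp
        moreover have "c \<in> names (wperm (nswap a c) w)" using a by (simp add: image_iff) (metis nswap_left)
        ultimately show False using c by simp
      qed
    qed
  qed
qed

lemma fresh_wperm: "fresh wperm b v \<longleftrightarrow> b \<notin> names v"
  by (simp add: fresh_def supp_wperm)

lemma nswap_perm: "inj p \<Longrightarrow> nswap (p a) (p b) (p z) = p (nswap a b z)"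
  by (auto simp: nswap_def inj_eq)

lemma alpha_step_perm:
  assumes p: "inj p" and st: "alpha_step u u'"
  shows "alpha_step (wperm p u) (wperm p u')"
proof -
  obtain x a v b w where u: "u = x @ Bar a # v" "u' = x @ Bar b # w"
    and c: "(a = b \<and> v = w) \<or> (fresh wperm b v \<and> wperm (nswap a b) v = w)"
    using st unfolding alpha_step_def by blast
  have e: "wperm (nswap (p a) (p b)) (wperm p v) = wperm p (wperm (nswap a b) v)"
    unfolding wperm_comp[symmetric] by (rule wperm_cong) (simp add: nswap_perm[OF p])
  have "(p a = p b \<and> wperm p v = wperm p w) \<or>
        (fresh wperm (p b) (wperm p v) \<and> wperm (nswap (p a) (p b)) (wperm p v) = wperm p w)"
    using c e p by (auto simp: fresh_wperm inj_image_mem_iff)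
  moreover have "wperm p u = wperm p x @ Bar (p a) # wperm p v" "wperm p u' = wperm p x @ Bar (p b) # wperm p w"
    by (simp_all add: u)
  ultimately show ?thesis unfolding alpha_step_def by blast
qed

lemma equivclp_map:
  assumes "\<And>u u'. r u u' \<Longrightarrow> r (f u) (f u')" and "equivclp r u u'"
  shows "equivclp r (f u) (f u')"
  using assms(2)
proof (induction rule: equivclp_induct)
  case base then show ?case by simp
next
  case (step y z) then show ?case using assms(1) equivclp_into_equivclp by metis
qed

lemma alpha_eq_perm: "inj p \<Longrightarrow> alpha_eq u u' \<Longrightarrow> alpha_eq (wperm p u) (wperm p u')"
  unfolding alpha_eq_def by (rule equivclp_map[where r=alpha_step]) (simp add: alpha_step_perm)

lemma alpha_step_cons: "alpha_step u u' \<Longrightarrow> alpha_step (l # u) (l # u')"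
  unfolding alpha_step_def by (metis append_Cons)

lemma alpha_eq_cons: "alpha_eq u u' \<Longrightarrow> alpha_eq (l # u) (l # u')"
  unfolding alpha_eq_def by (rule equivclp_map[where r=alpha_step]) (simp add: alpha_step_cons)

lemma alpha_eq_refl[simp]: "alpha_eq u u"
  by (simp add: alpha_eq_def)

lemma alpha_eq_sym: "alpha_eq u v \<Longrightarrow> alpha_eq v u"
  unfolding alpha_eq_def by (rule equivclp_sym)

lemma alpha_eq_trans: "alpha_eq u v \<Longrightarrow> alpha_eq v w \<Longrightarrow> alpha_eq u w"
  unfolding alpha_eq_def by (rule equivclp_trans)

lemma acls_eq_iff: "acls u = acls v \<longleftrightarrow> alpha_eq u v"
proof
  assume "acls u = acls v"
  then have "v \<in> acls u" by (simp add: acls_def)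
  then show "alpha_eq u v" by (simp add: acls_def)
next
  assume "alpha_eq u v"
  then show "acls u = acls v" unfolding acls_def
    by (auto intro: alpha_eq_trans alpha_eq_sym)
qed

lemma clsperm_acls: "clsperm (nswap a b) (acls w) = acls (wperm (nswap a b) w)"
proof -
  have "wperm (nswap a b) ` acls w = acls (wperm (nswap a b) w)"
  proof
    show "wperm (nswap a b) ` acls w \<subseteq> acls (wperm (nswap a b) w)"
      unfolding acls_def using alpha_eq_perm[OF inj_nswap] by blast
  next
    show "acls (wperm (nswap a b) w) \<subseteq> wperm (nswap a b) ` acls w"
    proof
      fix v assume "v \<in> acls (wperm (nswap a b) w)"
      then have "alpha_eq (wperm (nswap a b) w) v" by (simp add: acls_def)
      then have "alpha_eq w (wperm (nswap a b) v)"
        using alpha_eq_perm[OF inj_nswap, of "wperm (nswap a b) w" v a b] by simp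
      then show "v \<in> wperm (nswap a b) ` acls w" unfolding acls_def
        by (metis (mono_tags, lifting) image_eqI mem_Collect_eq wperm_swap_inv)
    qed
  qed
  then show ?thesis by (simp add: clsperm_def setact_def)
qed

lemma clsperm_inv[simp]: "clsperm (nswap a b) (clsperm (nswap a b) X) = X"
  using gact_inv[OF gact_clsperm] by simp

lemma mem_transport: "(X \<in> L) \<longleftrightarrow> (clsperm (nswap a b) X \<in> langperm (nswap a b) L)"
proof -
  have "inj (clsperm (nswap a b))" by (metis clsperm_inv injI)
  then show ?thesis by (simp add: langperm_def setact_def inj_image_mem_iff)
qed

section \<open>Inversion of alpha-equivalence\<close>

definition BR :: "bletter list \<Rightarrow> bletter list \<Rightarrow> bool" where
  "BR u u' \<longleftrightarrow> (u = [] \<and> u' = []) \<or>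
     (\<exists>a x x'. u = Plain a # x \<and> u' = Plain a # x' \<and> alpha_eq x x') \<or>
     (\<exists>a x b x'. u = Bar a # x \<and> u' = Bar b # x' \<and>
        (\<forall>e. e \<notin> names x \<and> e \<notin> names x' \<and> e \<noteq> a \<and> e \<noteq> b \<longrightarrow>
             alpha_eq (wperm (nswap a e) x) (wperm (nswap b e) x')))"

lemma BR_refl: "BR u u"
proof (cases u)
  case Nil then show ?thesis by (simp add: BR_def)
next
  case (Cons l x) then show ?thesis by (cases l) (auto simp: BR_def)
qed

lemma BR_sym: "BR u u' \<Longrightarrow> BR u' u"
  unfolding BR_def by (blast intro: alpha_eq_sym)

lemma swap_twice_word:
  assumes "e \<notin> names x" "f \<notin> names x" "f \<noteq> a" "e \<noteq> f"
  shows "wperm (nswap e f) (wperm (nswap a f) x) = wperm (nswap a e) x"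
  unfolding wperm_comp[symmetric]
  by (rule wperm_cong) (use assms in \<open>auto simp: nswap_def\<close>)

lemma BR_trans: assumes "BR u u'" "BR u' u''" shows "BR u u''"
proof -
  consider "u = [] \<and> u' = []"
    | (P) a x x' where "u = Plain a # x" "u' = Plain a # x'" "alpha_eq x x'"
    | (B) a x b x' where "u = Bar a # x" "u' = Bar b # x'"
        "\<forall>e. e \<notin> names x \<and> e \<notin> names x' \<and> e \<noteq> a \<and> e \<noteq> b \<longrightarrow>
             alpha_eq (wperm (nswap a e) x) (wperm (nswap b e) x')"
    using assms(1) unfolding BR_def by blast
  then show ?thesis
  proof cases
    case 1 then show ?thesis using assms(2) by (simp add: BR_def)
  next
    case P then show ?thesis using assms(2) unfolding BR_def by (auto intro: alpha_eq_trans)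
  next
    case B
    from assms(2) B obtain c x'' where B2: "u'' = Bar c # x''"
      "\<forall>e. e \<notin> names x' \<and> e \<notin> names x'' \<and> e \<noteq> b \<and> e \<noteq> c \<longrightarrow>
             alpha_eq (wperm (nswap b e) x') (wperm (nswap c e) x'')"
      unfolding BR_def by auto
    have "\<forall>e. e \<notin> names x \<and> e \<notin> names x'' \<and> e \<noteq> a \<and> e \<noteq> c \<longrightarrow>
             alpha_eq (wperm (nswap a e) x) (wperm (nswap c e) x'')"
    proof (intro allI impI)
      fix e assume e: "e \<notin> names x \<and> e \<notin> names x'' \<and> e \<noteq> a \<and> e \<noteq> c"
      obtain f where f: "f \<notin> names x \<union> names x' \<union> names x'' \<union> {a, b, c, e}"
        using fresh_name[of "names x \<union> names x' \<union> names x'' \<union> {a, b, c, e}"] by auto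
      have "alpha_eq (wperm (nswap a f) x) (wperm (nswap c f) x'')"
        using B(3) B2(2) f by (blast intro: alpha_eq_trans)
      then have "alpha_eq (wperm (nswap e f) (wperm (nswap a f) x)) (wperm (nswap e f) (wperm (nswap c f) x''))"
        by (rule alpha_eq_perm[OF inj_nswap])
      then show "alpha_eq (wperm (nswap a e) x) (wperm (nswap c e) x'')"
        using swap_twice_word[of e x f a] swap_twice_word[of e x'' f c] e f by auto
    qed
    then show ?thesis using B B2 unfolding BR_def by blast
  qed
qed

lemma BR_step: assumes "alpha_step u u'" shows "BR u u'"
proof -
  obtain x a v b w where u: "u = x @ Bar a # v" "u' = x @ Bar b # w"
    and c: "(a = b \<and> v = w) \<or> (fresh wperm b v \<and> wperm (nswap a b) v = w)"
    using assms unfolding alpha_step_def by blast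
  show ?thesis
  proof (cases x)
    case Nil
    have "\<forall>e. e \<notin> names v \<and> e \<notin> names w \<and> e \<noteq> a \<and> e \<noteq> b \<longrightarrow>
             alpha_eq (wperm (nswap a e) v) (wperm (nswap b e) w)"
    proof (intro allI impI)
      fix e assume e: "e \<notin> names v \<and> e \<notin> names w \<and> e \<noteq> a \<and> e \<noteq> b"
      show "alpha_eq (wperm (nswap a e) v) (wperm (nswap b e) w)"
        using c
      proof
        assume "a = b \<and> v = w" then show ?thesis by simp
      next
        assume c2: "fresh wperm b v \<and> wperm (nswap a b) v = w"
        have "wperm (nswap a e) v = wperm (nswap b e) (wperm (nswap a b) v)"
          unfolding wperm_comp[symmetric]
          by (rule wperm_cong) (use c2 e in \<open>auto simp: nswap_def fresh_wperm\<close>)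
        then show ?thesis using c2 by simp
      qed
    qed
    then show ?thesis using u Nil unfolding BR_def by auto
  next
    case (Cons l x0)
    have st: "alpha_step (x0 @ Bar a # v) (x0 @ Bar b # w)"
      unfolding alpha_step_def using c by blast
    then have ae: "alpha_eq (x0 @ Bar a # v) (x0 @ Bar b # w)" by (simp add: alpha_eq_def r_into_equivclp)
    show ?thesis
    proof (cases l)
      case (Plain d) then show ?thesis using u Cons ae unfolding BR_def by auto
    next
      case (Bar d)
      have "\<forall>e. alpha_eq (wperm (nswap d e) (x0 @ Bar a # v)) (wperm (nswap d e) (x0 @ Bar b # w))"
        using alpha_eq_perm[OF inj_nswap ae] by blast
      then show ?thesis using u Cons Bar unfolding BR_def by auto
    qed
  qed
qed

lemma alpha_BR: "alpha_eq u u' \<Longrightarrow> BR u u'"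
  unfolding alpha_eq_def
proof (induction rule: equivclp_induct)
  case base then show ?case by (rule BR_refl)
next
  case (step y z)
  then have "BR y z" using BR_step BR_sym by blast
  then show ?case using step BR_trans by blast
qed

lemma alpha_nil: "alpha_eq [] w \<Longrightarrow> w = []"
  using alpha_BR unfolding BR_def by blast

lemma alpha_plain: "alpha_eq (Plain a # x) w \<Longrightarrow> \<exists>x'. w = Plain a # x' \<and> alpha_eq x x'"
  using alpha_BR unfolding BR_def by blast

lemma alpha_bar: "alpha_eq (Bar a # x) w \<Longrightarrow> \<exists>b x'. w = Bar b # x' \<and>
   (\<forall>e. e \<notin> names x \<and> e \<notin> names x' \<and> e \<noteq> a \<and> e \<noteq> b \<longrightarrow>
             alpha_eq (wperm (nswap a e) x) (wperm (nswap b e) x'))"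
  using alpha_BR unfolding BR_def by blast

lemma alpha_bar_rename: "e \<notin> names w \<Longrightarrow> alpha_eq (Bar b # w) (Bar e # wperm (nswap b e) w)"
  unfolding alpha_eq_def
  by (rule r_into_equivclp) (unfold alpha_step_def, rule exI[of _ "[]"], auto simp: fresh_wperm)



lemma abs_refl: "x \<in> X \<Longrightarrow> finite (supp act x) \<Longrightarrow> (a, x) \<in> abs_cl X act a x"
proof -
  assume x: "x \<in> X" and f: "finite (supp act x)"
  obtain c where c: "c \<notin> supp act x \<union> {a}" using fresh_name[of "supp act x \<union> {a}"] f by blast
  have "abs_rel act (a, x) (a, x)" unfolding abs_rel_iff fresh_def using c by blast
  then show ?thesis using x by (simp add: abs_cl_def)
qed

lemma Term_sub: "L \<in> Term \<Longrightarrow> L \<subseteq> range acls"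
  unfolding Term_def Pfs_def by (rule conjunct1) simp

lemma Term_fs: "L \<in> Term \<Longrightarrow> \<exists>T. finite T \<and> supports langperm T L"
  unfolding Term_def Pfs_def langperm_def by (rule conjunct2) simp

lemma Term_finsupp: "L \<in> Term \<Longrightarrow> finite (supp langperm L)"
proof -
  assume "L \<in> Term"
  then obtain T where "finite T" "supports langperm T L" using Term_fs by blast
  then show ?thesis by (rule finite_supp)
qed

lemma fresh_exists: "finite (supp act x) \<Longrightarrow> (SOME a. fresh act a x) \<notin> supp act x"
proof -
  assume "finite (supp act x)"
  then obtain a where "a \<notin> supp act x" using fresh_name by blast
  then have "fresh act a x" unfolding fresh_def .
  then have "fresh act (SOME a. fresh act a x) x" by (rule someI)
  then show ?thesis unfolding fresh_def .
qed

context
  fixes Q :: "'q set" and act :: "'q action" and R :: "('q \<times> bletter \<times> 'q) set"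
    and F :: "'q set" and h :: "'q set \<Rightarrow> bclass set"
  assumes rn: "rnna Q act R F"
    and hom: "G_hom (Pufs Q act) (setact act) (det Q act R F) Term langperm tau h"
begin

lemma rn_nom: "nominal Q act" using rn unfolding rnna_def by (elim conjE) assumption
lemma rn_R: "R \<subseteq> Q \<times> UNIV \<times> Q" using rn unfolding rnna_def by (elim conjE) assumption
lemma rn_Req: "\<forall>p q s q'. perm_fin p \<and> (q, s, q') \<in> R \<longrightarrow> (act p q, bperm p s, act p q') \<in> R"
  using rn unfolding rnna_def by (elim conjE) assumption
lemma rn_Feq: "\<forall>p q. perm_fin p \<and> q \<in> F \<longrightarrow> act p q \<in> F"
  using rn unfolding rnna_def by (elim conjE) assumption
lemma rn_bar: "\<forall>q a q' b q''. (q, Bar a, q') \<in> R \<and> q'' \<in> Q \<and> abs_rel act (a, q') (b, q'')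
         \<longrightarrow> (q, Bar b, q'') \<in> R"
  using rn unfolding rnna_def by (elim conjE) assumption
lemma rn_fin: "\<forall>q\<in>Q. finite {(a, q'). (q, Plain a, q') \<in> R} \<and>
             finite {abs_cl Q act a q' | a q'. (q, Bar a, q') \<in> R}"
  using rn unfolding rnna_def by (elim conjE) assumption

lemma gQ: "gact Q act" using rn_nom nominal_gact by blast

lemma Q_fs: "x \<in> Q \<Longrightarrow> \<exists>T. finite T \<and> supports act T x"
  using rn_nom unfolding nominal_def by blast

lemma Q_finsupp: "x \<in> Q \<Longrightarrow> finite (supp act x)"
proof -
  assume "x \<in> Q"
  then obtain T where "finite T" "supports act T x" using Q_fs by blast
  then show ?thesis by (rule finite_supp)
qed

lemma R_sub: "(q, l, q') \<in> R \<Longrightarrow> q \<in> Q \<and> q' \<in> Q"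
  using rn_R by blast

lemma R_eqv: "perm_fin p \<Longrightarrow> (q, l, q') \<in> R \<Longrightarrow> (act p q, bperm p l, act p q') \<in> R"
  using rn_Req by blast

lemma F_eqv: "perm_fin p \<Longrightarrow> q \<in> F \<Longrightarrow> act p q \<in> F"
  using rn_Feq by blast

lemma R_bar: "(q, Bar a, q') \<in> R \<Longrightarrow> q'' \<in> Q \<Longrightarrow> abs_rel act (a, q') (b, q'') \<Longrightarrow> (q, Bar b, q'') \<in> R"
  using rn_bar by blast

lemma fin_plain: "q \<in> Q \<Longrightarrow> finite {(a, q'). (q, Plain a, q') \<in> R}"
  using rn_fin by blast

lemma fin_bar: "q \<in> Q \<Longrightarrow> finite {abs_cl Q act a q' | a q'. (q, Bar a, q') \<in> R}"
  using rn_fin by blast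

lemma accepts_perm: "accepts R F s v \<Longrightarrow> accepts R F (act (nswap a b) s) (wperm (nswap a b) v)"
proof (induction rule: accepts.induct)
  case (acc_nil q) then show ?case by (simp add: F_eqv accepts.acc_nil)
next
  case (acc_cons q s q' w)
  then show ?case using R_eqv[of "nswap a b" q s q'] by (simp add: accepts.acc_cons)
qed

lemma accepts_nil: "accepts R F q [] \<longleftrightarrow> q \<in> F"
  by (auto elim: accepts.cases intro: accepts.intros)

lemma accepts_cons: "accepts R F q (l # w) \<longleftrightarrow> (\<exists>q'. (q, l, q') \<in> R \<and> accepts R F q' w)"
  by (auto elim: accepts.cases intro: accepts.intros)

lemma fin_Pufs: "finite S \<Longrightarrow> S \<subseteq> Q \<Longrightarrow> S \<in> Pufs Q act"
  unfolding Pufs_def using Q_finsupp by auto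

lemma fin_setsupp: "finite S \<Longrightarrow> S \<subseteq> Q \<Longrightarrow> finite (supp (setact act) S)"
proof -
  assume S: "finite S" "S \<subseteq> Q"
  then have "\<forall>x\<in>S. \<exists>T. finite T \<and> supports act T x" using Q_fs by blast
  then obtain f where f: "\<forall>x\<in>S. finite (f x) \<and> supports act (f x) x" by metis
  have sup: "supports (setact act) (\<Union>(f ` S)) S"
    unfolding supports_def setact_def
  proof (intro allI impI)
    fix p assume p: "perm_fin p \<and> (\<forall>a\<in>\<Union> (f ` S). p a = a)"
    have "\<forall>x\<in>S. act p x = x" using f p unfolding supports_def by blast
    then show "act p ` S = S" by simp
  qed
  have "finite (\<Union>(f ` S))" using S f by blast
  then show ?thesis using sup by (rule finite_supp)
qed

lemma abs_cl_inj: "x \<in> Q \<Longrightarrow> y \<in> Q \<Longrightarrow> abs_cl Q act a x = abs_cl Q act a y \<Longrightarrow> x = y"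
proof -
  assume x: "x \<in> Q" and y: "y \<in> Q" and eq: "abs_cl Q act a x = abs_cl Q act a y"
  have "(a, y) \<in> abs_cl Q act a x" using abs_refl[OF y Q_finsupp[OF y]] eq by simp
  then have r: "abs_rel act (a, x) (a, y)" unfolding abs_cl_def by simp
  obtain e where e: "e \<notin> supp act x \<union> supp act y \<union> {a}"
    using fresh_name[of "supp act x \<union> supp act y \<union> {a}"] Q_finsupp[OF x] Q_finsupp[OF y] by auto
  have "act (nswap a e) x = act (nswap a e) y"
    by (rule abs_rel_all[OF gQ x y r]) (use e in auto)
  then have "act (nswap a e) (act (nswap a e) x) = act (nswap a e) (act (nswap a e) y)" by simp
  then show "x = y" by (simp only: gact_inv[OF gQ x] gact_inv[OF gQ y])
qed

lemma succs_fin: "finite S \<Longrightarrow> S \<subseteq> Q \<Longrightarrow> finite (succs R l S) \<and> succs R l S \<subseteq> Q"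
proof -
  assume S: "finite S" "S \<subseteq> Q"
  have sub: "succs R l S \<subseteq> Q" unfolding succs_def using R_sub by blast
  have "finite {q'. (x, l, q') \<in> R}" if x: "x \<in> S" for x
  proof (cases l)
    case (Plain a)
    have "{q'. (x, l, q') \<in> R} \<subseteq> snd ` {(a, q'). (x, Plain a, q') \<in> R}"
      using Plain by (auto simp: image_iff)
    moreover have "finite {(a, q'). (x, Plain a, q') \<in> R}" using fin_plain[of x] x S by blast
    ultimately show ?thesis by (meson finite_imageI finite_subset)
  next
    case (Bar a)
    let ?A = "{q'. (x, l, q') \<in> R}"
    have inj: "inj_on (abs_cl Q act a) ?A"
    proof (rule inj_onI)
      fix y z assume "y \<in> ?A" "z \<in> ?A" "abs_cl Q act a y = abs_cl Q act a z"
      then show "y = z" using R_sub abs_cl_inj by blast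
    qed
    have "abs_cl Q act a ` ?A \<subseteq> {abs_cl Q act a q' | a q'. (x, Bar a, q') \<in> R}" using Bar by blast
    moreover have "finite {abs_cl Q act a q' | a q'. (x, Bar a, q') \<in> R}" using fin_bar[of x] x S by blast
    ultimately have "finite (abs_cl Q act a ` ?A)" by (rule finite_subset)
    then show ?thesis using inj by (rule finite_imageD)
  qed
  then have "finite (succs R l S)" unfolding succs_def using S(1) by (intro finite_UN_I) auto
  then show ?thesis using sub by blast
qed

lemma hom_p1: "\<forall>x\<in>Pufs Q act. h x \<in> Term"
  using hom unfolding G_hom_def by (elim conjE) assumption
lemma hom_p2: "equivariant_map (Pufs Q act) (setact act) langperm h"
  using hom unfolding G_hom_def by (elim conjE) assumption
lemma hom_p3: "\<forall>x\<in>Pufs Q act. Gmap Term langperm h (det Q act R F x) = tau (h x)"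
  using hom unfolding G_hom_def by (elim conjE) assumption

lemma hom_in: "S \<in> Pufs Q act \<Longrightarrow> h S \<in> Term"
  using hom_p1 by blast

lemma hom_eqv: "S \<in> Pufs Q act \<Longrightarrow> h (setact act (nswap a b) S) = langperm (nswap a b) (h S)"
  using hom_p2 unfolding equivariant_map_def by simp

lemma hom_eq: "S \<in> Pufs Q act \<Longrightarrow> Gmap Term langperm h (det Q act R F S) = tau (h S)"
  using hom_p3 by blast


lemma main:
  "finite S \<Longrightarrow> S \<subseteq> Q \<Longrightarrow> (acls w \<in> h S) = (\<exists>w'. alpha_eq w w' \<and> (\<exists>s\<in>S. accepts R F s w'))"
proof (induction "length w" arbitrary: w S rule: less_induct)
  case less
  have SP: "S \<in> Pufs Q act" using fin_Pufs less.prems by blast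
  have HE: "Gmap Term langperm h (det Q act R F S) = tau (h S)" using hom_eq SP by blast
  show ?case
  proof (cases w)
    case Nil
    have "(acls [] \<in> h S) = (\<exists>s\<in>S. s \<in> F)" using HE by (simp add: Gmap_def det_def tau_def Let_def)
    moreover have "(\<exists>w'. alpha_eq [] w' \<and> (\<exists>s\<in>S. accepts R F s w')) = (\<exists>s\<in>S. s \<in> F)"
    proof
      assume "\<exists>w'. alpha_eq [] w' \<and> (\<exists>s\<in>S. accepts R F s w')"
      then obtain w' s where "alpha_eq [] w'" "s \<in> S" "accepts R F s w'" by blast
      then show "\<exists>s\<in>S. s \<in> F" using alpha_nil accepts_nil by blast
    next
      assume "\<exists>s\<in>S. s \<in> F"
      then show "\<exists>w'. alpha_eq [] w' \<and> (\<exists>s\<in>S. accepts R F s w')" using accepts_nil alpha_eq_refl by blast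
    qed
    ultimately show ?thesis using Nil by simp
  next
    case (Cons l w0)
    show ?thesis
    proof (cases l)
      case (Plain a)
      have wP: "w = Plain a # w0" using Cons Plain by simp
      define N where "N = succs R (Plain a) S"
      have Nf: "finite N" "N \<subseteq> Q" using succs_fin less.prems unfolding N_def by blast+
      have hN: "h N = {acls u | u. acls (Plain a # u) \<in> h S}"
        using HE by (simp add: Gmap_def det_def tau_def Let_def fun_eq_iff N_def)
      have "(acls w \<in> h S) = (acls w0 \<in> h N)"
      proof
        assume "acls w \<in> h S" then show "acls w0 \<in> h N" unfolding hN wP by blast
      next
        assume "acls w0 \<in> h N"
        then obtain u where u: "acls w0 = acls u" "acls (Plain a # u) \<in> h S" unfolding hN by blast
        have "acls (Plain a # w0) = acls (Plain a # u)" using u(1) by (simp add: acls_eq_iff alpha_eq_cons)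
        then show "acls w \<in> h S" using u(2) wP by simp
      qed
      also have "\<dots> = (\<exists>w'. alpha_eq w0 w' \<and> (\<exists>s'\<in>N. accepts R F s' w'))"
        using less.hyps[of w0 N] Nf wP by simp
      also have "\<dots> = (\<exists>w'. alpha_eq w w' \<and> (\<exists>s\<in>S. accepts R F s w'))"
      proof
        assume "\<exists>w'. alpha_eq w0 w' \<and> (\<exists>s'\<in>N. accepts R F s' w')"
        then obtain w' s' where a: "alpha_eq w0 w'" "s' \<in> N" "accepts R F s' w'" by blast
        then obtain s where s: "s \<in> S" "(s, Plain a, s') \<in> R" unfolding N_def succs_def by blast
        have "accepts R F s (Plain a # w')" using s a accepts_cons by blast
        moreover have "alpha_eq w (Plain a # w')" using a wP alpha_eq_cons by simp
        ultimately show "\<exists>w'. alpha_eq w w' \<and> (\<exists>s\<in>S. accepts R F s w')" using s by blast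
      next
        assume "\<exists>w'. alpha_eq w w' \<and> (\<exists>s\<in>S. accepts R F s w')"
        then obtain w' s where a: "alpha_eq (Plain a # w0) w'" "s \<in> S" "accepts R F s w'" using wP by blast
        then obtain x' where x': "w' = Plain a # x'" "alpha_eq w0 x'" using alpha_plain by blast
        then obtain s' where "(s, Plain a, s') \<in> R" "accepts R F s' x'" using a accepts_cons by blast
        then show "\<exists>w'. alpha_eq w0 w' \<and> (\<exists>s'\<in>N. accepts R F s' w')"
          using x' a unfolding N_def succs_def by blast
      qed
      finally show ?thesis .
    next
      case (Bar b)
      have wB: "w = Bar b # w0" using Cons Bar by simp
      define a0 where "a0 = (SOME a. fresh (setact act) a S)"
      define a1 where "a1 = (SOME a. fresh langperm a (h S))"
      define N0 where "N0 = succs R (Bar a0) S"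
      define M where "M = {acls u | u. acls (Bar a1 # u) \<in> h S}"
      have HE3: "abs_map Term langperm h (abs_cl (Pufs Q act) (setact act) a0 N0) = abs_cl Term langperm a1 M"
        using HE unfolding a0_def a1_def N0_def M_def by (simp add: Gmap_def det_def tau_def Let_def)
      have gS: "gact {S. S \<subseteq> Q} (setact act)" using gact_setact[OF gQ] .
      have Sin: "S \<in> {S. S \<subseteq> Q}" using less.prems by simp
      have fsS: "finite (supp (setact act) S)" using fin_setsupp less.prems by blast
      have a0f: "a0 \<notin> supp (setact act) S" unfolding a0_def using fsS by (rule fresh_exists)
      have hST: "h S \<in> Term" using hom_in SP by blast
      have fshS: "finite (supp langperm (h S))" using hST by (rule Term_finsupp)
      have a1f: "a1 \<notin> supp langperm (h S)" unfolding a1_def using fshS by (rule fresh_exists)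
      have N0f: "finite N0" "N0 \<subseteq> Q" using succs_fin less.prems unfolding N0_def by blast+
      have N0P: "N0 \<in> Pufs Q act" using fin_Pufs N0f by blast
      have fsN0: "finite (supp (setact act) N0)" using fin_setsupp N0f by blast
      have hN0T: "h N0 \<in> Term" using hom_in N0P by blast
      have fshN0: "finite (supp langperm (h N0))" using hN0T by (rule Term_finsupp)
      have r0: "(a0, N0) \<in> abs_cl (Pufs Q act) (setact act) a0 N0" using N0P fsN0 by (rule abs_refl)
      have r1: "(a0, h N0) \<in> abs_cl Term langperm a0 (h N0)" using hN0T fshN0 by (rule abs_refl)
      have "(a0, h N0) \<in> abs_map Term langperm h (abs_cl (Pufs Q act) (setact act) a0 N0)"
        unfolding abs_map_def using r0 r1 by blast
      then have ar: "abs_rel langperm (a1, M) (a0, h N0)" using HE3 unfolding abs_cl_def by simp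
      then obtain c where c: "c \<noteq> a1" "c \<noteq> a0" "c \<notin> supp langperm M" "c \<notin> supp langperm (h N0)"
        "langperm (nswap a1 c) M = langperm (nswap a0 c) (h N0)"
        unfolding abs_rel_iff fresh_def by blast
      have Meq: "M = langperm (nswap a1 c) (langperm (nswap a0 c) (h N0))"
        using c(5) gact_inv[OF gact_langperm UNIV_I, of a1 c M] by simp
      obtain T where T: "finite T" "supports langperm T (h N0)" using Term_fs[OF hN0T] by blast
      have supM: "supports langperm (nswap a1 c ` nswap a0 c ` T) M"
        unfolding Meq
        by (rule supports_swap_image[OF gact_langperm UNIV_I],
            rule supports_swap_image[OF gact_langperm UNIV_I], rule T(2))
      have finT: "finite (nswap a1 c ` nswap a0 c ` T)" using T(1) by simp
      have fsM: "finite (supp langperm M)" using finT supM by (rule finite_supp)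
      define E0 where "E0 = supp (setact act) S \<union> {a0, a1, b} \<union> supp langperm (h S) \<union>
         supp langperm M \<union> supp langperm (h N0) \<union> names w0"
      have fE0: "finite E0" unfolding E0_def using fsS fshS fsM fshN0 by simp
      have key: "(acls w \<in> h S) = (\<exists>w''. alpha_eq (wperm (nswap b e) w0) w'' \<and>
                   (\<exists>s\<in>S. \<exists>s'. (s, Bar e, s') \<in> R \<and> accepts R F s' w''))" if e: "e \<notin> E0" for e
      proof -
        define we where "we = wperm (nswap b e) w0"
        have 1: "acls w = acls (Bar e # we)" unfolding wB we_def acls_eq_iff
          using e E0_def alpha_bar_rename by auto
        have hSfix: "langperm (nswap a1 e) (h S) = h S"
          using supp_swap_fix[OF gact_langperm UNIV_I a1f] e E0_def by auto
        have 2: "(acls (Bar e # we) \<in> h S) = (acls (Bar a1 # wperm (nswap a1 e) we) \<in> h S)"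
          using mem_transport[of "acls (Bar e # we)" "h S" a1 e] hSfix by (simp add: clsperm_acls)
        have 3: "(acls (Bar a1 # u) \<in> h S) = (acls u \<in> M)" for u
        proof
          assume "acls (Bar a1 # u) \<in> h S" then show "acls u \<in> M" unfolding M_def by blast
        next
          assume "acls u \<in> M"
          then obtain u' where u': "acls u = acls u'" "acls (Bar a1 # u') \<in> h S" unfolding M_def by blast
          have "acls (Bar a1 # u) = acls (Bar a1 # u')" using u'(1) by (simp add: acls_eq_iff alpha_eq_cons)
          then show "acls (Bar a1 # u) \<in> h S" using u'(2) by simp
        qed
        have 4: "(acls (wperm (nswap a1 e) we) \<in> M) = (acls we \<in> langperm (nswap a1 e) M)"
          using mem_transport[of "acls (wperm (nswap a1 e) we)" M a1 e] by (simp add: clsperm_acls)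
        have 5: "langperm (nswap a1 e) M = langperm (nswap a0 e) (h N0)"
          by (rule abs_rel_all[OF gact_langperm UNIV_I UNIV_I ar]) (use e E0_def in auto)
        have Sfix: "setact act (nswap a0 e) S = S"
          using supp_swap_fix[OF gS Sin a0f] e E0_def by auto
        define Ne where "Ne = succs R (Bar e) S"
        have 6: "setact act (nswap a0 e) N0 = Ne"
        proof
          show "setact act (nswap a0 e) N0 \<subseteq> Ne"
          proof
            fix t assume "t \<in> setact act (nswap a0 e) N0"
            then obtain s s' where ss: "s \<in> S" "(s, Bar a0, s') \<in> R" "t = act (nswap a0 e) s'"
              unfolding setact_def N0_def succs_def by auto
            then have "(act (nswap a0 e) s, Bar e, t) \<in> R" using R_eqv[of "nswap a0 e" s "Bar a0" s'] by simp
            moreover have "act (nswap a0 e) s \<in> S" using Sfix ss(1) unfolding setact_def by blast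
            ultimately show "t \<in> Ne" unfolding Ne_def succs_def by blast
          qed
        next
          show "Ne \<subseteq> setact act (nswap a0 e) N0"
          proof
            fix t assume "t \<in> Ne"
            then obtain s where s: "s \<in> S" "(s, Bar e, t) \<in> R" unfolding Ne_def succs_def by auto
            then have "(act (nswap a0 e) s, Bar a0, act (nswap a0 e) t) \<in> R"
              using R_eqv[of "nswap a0 e" s "Bar e" t] by simp
            moreover have "act (nswap a0 e) s \<in> S" using Sfix s(1) unfolding setact_def by blast
            ultimately have "act (nswap a0 e) t \<in> N0" unfolding N0_def succs_def by blast
            moreover have "t = act (nswap a0 e) (act (nswap a0 e) t)"
              using gact_inv[OF gQ] R_sub s(2) by metis
            ultimately show "t \<in> setact act (nswap a0 e) N0" unfolding setact_def by blast
          qed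
        qed
        have 7: "h Ne = langperm (nswap a0 e) (h N0)" using hom_eqv[OF N0P, of a0 e] 6 by simp
        have Nef: "finite Ne" "Ne \<subseteq> Q" using succs_fin less.prems unfolding Ne_def by blast+
        have 8: "(acls we \<in> h Ne) = (\<exists>w''. alpha_eq we w'' \<and> (\<exists>s'\<in>Ne. accepts R F s' w''))"
          using less.hyps[of we Ne] Nef wB we_def by simp
        have "(acls w \<in> h S) = (acls we \<in> h Ne)"
          using 1 2 3[of "wperm (nswap a1 e) we"] 4 5 7 by simp
        also have "\<dots> = (\<exists>w''. alpha_eq we w'' \<and> (\<exists>s\<in>S. \<exists>s'. (s, Bar e, s') \<in> R \<and> accepts R F s' w''))"
          using 8 unfolding Ne_def succs_def by blast
        finally show ?thesis unfolding we_def .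
      qed
      show ?thesis
      proof
        assume A: "acls w \<in> h S"
        obtain e where e: "e \<notin> E0" using fresh_name[OF fE0] by blast
        obtain w'' s s' where x: "alpha_eq (wperm (nswap b e) w0) w''" "s \<in> S" "(s, Bar e, s') \<in> R"
          "accepts R F s' w''" using key[OF e] A by blast
        have "alpha_eq w (Bar e # w'')"
          using alpha_eq_trans[OF alpha_bar_rename alpha_eq_cons[OF x(1)]] e wB E0_def by auto
        moreover have "accepts R F s (Bar e # w'')" using x accepts_cons by blast
        ultimately show "\<exists>w'. alpha_eq w w' \<and> (\<exists>s\<in>S. accepts R F s w')" using x(2) by blast
      next
        assume "\<exists>w'. alpha_eq w w' \<and> (\<exists>s\<in>S. accepts R F s w')"
        then obtain w' s where a: "alpha_eq (Bar b # w0) w'" "s \<in> S" "accepts R F s w'" using wB by blast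
        then obtain d v where w': "w' = Bar d # v" and av: "\<forall>e. e \<notin> names w0 \<and> e \<notin> names v \<and> e \<noteq> b \<and> e \<noteq> d \<longrightarrow>
             alpha_eq (wperm (nswap b e) w0) (wperm (nswap d e) v)"
          using alpha_bar by blast
        obtain s' where s': "(s, Bar d, s') \<in> R" "accepts R F s' v" using a(3) w' accepts_cons by blast
        have s'Q: "s' \<in> Q" using R_sub s'(1) by blast
        have fss': "finite (supp act s')" using Q_finsupp s'Q by blast
        obtain e where e: "e \<notin> E0 \<union> names v \<union> supp act s' \<union> {d}"
          using fresh_name[of "E0 \<union> names v \<union> supp act s' \<union> {d}"] fE0 fss' by auto
        define s'' where "s'' = act (nswap d e) s'"
        have s''Q: "s'' \<in> Q" unfolding s''_def using gact_closed[OF gQ _ s'Q] by simp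
        have fss'': "finite (supp act s'')" using Q_finsupp s''Q by blast
        obtain c where c: "c \<notin> supp act s' \<union> supp act s'' \<union> {d, e}"
          using fresh_name[of "supp act s' \<union> supp act s'' \<union> {d, e}"] fss' fss'' by auto
        have "act (nswap d c) s' = act (nswap e c) s''"
          unfolding s''_def by (rule swap_conj[OF gQ s'Q]) (use e c in auto)
        then have "abs_rel act (d, s') (e, s'')" unfolding abs_rel_iff fresh_def using c by blast
        then have t: "(s, Bar e, s'') \<in> R" using R_bar s'(1) s''Q by blast
        have acc: "accepts R F s'' (wperm (nswap d e) v)" unfolding s''_def using s'(2) by (rule accepts_perm)
        have "alpha_eq (wperm (nswap b e) w0) (wperm (nswap d e) v)" using av e E0_def by auto
        then show "acls w \<in> h S" using key[of e] e t acc a(2) by blast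
      qed
    qed
  qed
qed

end


theorem corollary4p22:
  fixes Q :: "'q set" and act :: "'q action" and R :: "('q \<times> bletter \<times> 'q) set"
    and F :: "'q set" and h :: "'q set \<Rightarrow> bclass set"
  assumes "rnna Q act R F"
    and "G_hom (Pufs Q act) (setact act) (det Q act R F) Term langperm tau h"
    and "q \<in> Q"
  shows "h {q} = bar_lang R F q"
proof -
  have fin: "finite {q}" "{q} \<subseteq> Q" using assms(3) by auto
  note M = main[OF assms(1) assms(2) fin]
  have T: "h {q} \<in> Term" using hom_in[OF assms(1) assms(2) fin_Pufs[OF assms(1) assms(2) fin]] .
  show ?thesis
  proof
    show "h {q} \<subseteq> bar_lang R F q"
    proof
      fix X assume X: "X \<in> h {q}"
      then obtain w where w: "X = acls w" using Term_sub[OF T] by blast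
      then obtain w' where w': "alpha_eq w w'" "accepts R F q w'" using M X by auto
      have "X = acls w'" using w w'(1) acls_eq_iff by blast
      then show "X \<in> bar_lang R F q" unfolding bar_lang_def using w'(2) by blast
    qed
  next
    show "bar_lang R F q \<subseteq> h {q}"
    proof
      fix X assume "X \<in> bar_lang R F q"
      then obtain w where w: "X = acls w" "accepts R F q w" unfolding bar_lang_def by blast
      then show "X \<in> h {q}" using M alpha_eq_refl by blast
    qed
  qed
qed

end
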